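(* Let $R\in(0,\infty]$ and let $u\in C^\infty(B_R^{\mathbb H})$ be radial, $u(x)=v(d(x))$. Then $v\in C^\infty(0,R)$ and, for each $j\in\mathbb N$, \[ v^{(j)}(d(x))=\left(\frac{1-|x|^2}{2}\right)^j\sum_{i_1,\dots,i_j=1}^N(\nabla^ju)_{i_1\cdots i_j}(x)\,\frac{x_{i_1}\cdots x_{i_j}}{|x|^j},\quad\forall x\in B_R^{\mathbb H}\setminus\{0\}. \]
   Context: $\mathbb H^N$ is the Poincaré ball $\{x\in\mathbb R^N:|x|<1\}$ with metric $g_{ij}=\left(\frac{2}{1-|x|^2}\right)^2\delta_{ij}$, and $d(x)=\log\frac{1+|x|}{1-|x|}$; $B_R^{\mathbb H}=\{x:d(x)<R\}$. $\nabla^ju$ is the $j$-th covariant derivative of $u$, a $j$-covariant tensor field with components defined recursively by $(\nabla u)_i=\partial u/\partial x_i$ and, for a $k$-covariant tensor $\eta$, $(\nabla\eta)_{i_1\dots i_{k+1}}=\frac{\partial\eta_{i_2\dots i_{k+1}}}{\partial x_{i_1}}-\sum_{\ell=2}^{k+1}\sum_{\alpha=1}^N\Gamma^\alpha_{i_1i_\ell}\eta_{i_2\dots i_{\ell-1}\alpha i_{\ell+1}\dots i_{k+1}}$, with Christoffel symbols $\Gamma^k_{ij}=\frac{2}{1-|x|^2}(x_i\delta_{jk}+x_j\delta_{ik}-x_k\delta_{ij})$. *)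

theory Defs
  imports "HOL-Analysis.Analysis" "HOL-Library.Extended_Real"
begin

text \<open>C-infinity smoothness on a set (intended for open sets): f is differentiable
  on S and all first partial derivatives are again smooth on S (coinductively).\<close>
coinductive smooth_on :: "'a::euclidean_space set \<Rightarrow> ('a \<Rightarrow> real) \<Rightarrow> bool" for S where
  "f differentiable_on S \<Longrightarrow>
   (\<forall>b\<in>Basis. smooth_on S (\<lambda>x. frechet_derivative f (at x) b)) \<Longrightarrow> smooth_on S f"

text \<open>Hyperbolic distance from the origin in the Poincare ball.\<close>
definition hd :: "real^'n \<Rightarrow> real" where
  "hd x = ln ((1 + norm x) / (1 - norm x))"

definition hball :: "ereal \<Rightarrow> (real^'n) set" where
  "hball R = {x. norm x < 1 \<and> ereal (hd x) < R}"

definition christoffel :: "'n \<Rightarrow> 'n \<Rightarrow> 'n \<Rightarrow> real^'n \<Rightarrow> real" where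
  "christoffel k i j x = 2 / (1 - norm x ^ 2) *
     (x$i * (if j = k then 1 else 0) + x$j * (if i = k then 1 else 0) - x$k * (if i = j then 1 else 0))"

definition cov_deriv :: "(real^'n \<Rightarrow> 'n list \<Rightarrow> real) \<Rightarrow> real^'n \<Rightarrow> 'n list \<Rightarrow> real" where
  "cov_deriv eta x is = (case is of [] \<Rightarrow> 0
     | i1 # rest \<Rightarrow> frechet_derivative (\<lambda>y. eta y rest) (at x) (axis i1 1)
         - (\<Sum>l<length rest. \<Sum>\<alpha>\<in>UNIV. christoffel \<alpha> i1 (rest ! l) x * eta x (rest[l := \<alpha>])))"

fun cov_nabla :: "nat \<Rightarrow> (real^'n \<Rightarrow> real) \<Rightarrow> real^'n \<Rightarrow> 'n list \<Rightarrow> real" where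
  "cov_nabla 0 u = (\<lambda>x is. u x)"
| "cov_nabla (Suc j) u = cov_deriv (cov_nabla j u)"

end

theory Submission
  imports Defs
begin

inductive alg :: "(real^'n) set \<Rightarrow> (real^'n \<Rightarrow> real) \<Rightarrow> bool" for S where
  sm: "smooth_on S f \<Longrightarrow> alg S f"
| cst: "alg S (\<lambda>x. c)"
| crd: "alg S (\<lambda>x. x$i)"
| wgt: "alg S (\<lambda>x. 1 / (1 - norm x ^ 2))"
| add: "alg S f \<Longrightarrow> alg S g \<Longrightarrow> alg S (\<lambda>x. f x + g x)"
| mul: "alg S f \<Longrightarrow> alg S g \<Longrightarrow> alg S (\<lambda>x. f x * g x)"
| ext: "alg S f \<Longrightarrow> (\<forall>x\<in>S. f x = g x) \<Longrightarrow> alg S g"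

lemma w_deriv:
  fixes x :: "real^'n"
  assumes "norm x < 1"
  shows "((\<lambda>x. 1 / (1 - norm x ^ 2)) has_derivative (\<lambda>h. 2 * (x \<bullet> h) / (1 - norm x ^ 2)^2)) (at x)"
proof -
  have ne: "1 - x \<bullet> x \<noteq> 0" using assms
    by (metis eq_iff_diff_eq_0 less_irrefl norm_eq_sqrt_inner real_sqrt_one)
  have i: "((\<lambda>x. x \<bullet> x) has_derivative (\<lambda>h. x \<bullet> h + h \<bullet> x)) (at x)"
    by (rule has_derivative_inner[OF has_derivative_ident has_derivative_ident])
  have "((\<lambda>x. inverse (1 - x \<bullet> x)) has_derivative (\<lambda>h. - (inverse (1 - x \<bullet> x) * (0 - (x \<bullet> h + h \<bullet> x)) * inverse (1 - x \<bullet> x)))) (at x)"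
    by (rule Deriv.has_derivative_inverse[OF ne has_derivative_diff[OF has_derivative_const i]])
  then have "((\<lambda>x. 1 / (1 - x \<bullet> x)) has_derivative (\<lambda>h. 2 * (x \<bullet> h) / (1 - x \<bullet> x)^2)) (at x)"
    by (simp add: divide_inverse inner_commute power2_eq_square mult_ac)
  then show ?thesis by (simp add: power2_norm_eq_inner)
qed

lemma fd_cong:
  assumes "open S" "x \<in> S" "\<forall>y\<in>S. f y = g y" "f differentiable (at x)"
  shows "g differentiable (at x) \<and> frechet_derivative g (at x) = frechet_derivative f (at x)"
proof -
  have "(f has_derivative frechet_derivative f (at x)) (at x)"
    using assms(4) frechet_derivative_works by blast
  then have "(g has_derivative frechet_derivative f (at x)) (at x)"
    using has_derivative_transform_within_open assms(1,2,3) by blast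
  then show ?thesis using frechet_derivative_at differentiableI by metis
qed

lemma alg_deriv:
  fixes S :: "(real^'n) set"
  assumes S: "open S" "S \<subseteq> ball 0 1" and a: "alg S f"
  shows "(\<forall>x\<in>S. f differentiable (at x)) \<and> (\<forall>i. alg S (\<lambda>x. frechet_derivative f (at x) (axis i 1)))"
  using a
proof (induction rule: alg.induct)
  case (sm f)
  then show ?case using S
    by (cases rule: smooth_on.cases) (auto simp: differentiable_on_eq_differentiable_at axis_in_Basis_iff intro: alg.sm)
next
  case (cst c)
  have "frechet_derivative (\<lambda>x. c) (at x) = (\<lambda>h. 0)" for x :: "real^'n"
    using frechet_derivative_at[OF has_derivative_const] by metis
  then show ?case by (auto intro: alg.cst)
next
  case (crd i)
  have d: "((\<lambda>x::real^'n. x$i) has_derivative (\<lambda>h. h$i)) (at x)" for x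
    by (rule bounded_linear_imp_has_derivative) (rule bounded_linear_vec_nth)
  then have "frechet_derivative (\<lambda>x::real^'n. x$i) (at x) = (\<lambda>h. h$i)" for x
    using frechet_derivative_at by metis
  then show ?case using d by (auto intro: alg.cst differentiableI)
next
  case wgt
  show ?case
  proof
    show "\<forall>x\<in>S. (\<lambda>x. 1 / (1 - norm x ^ 2)) differentiable at x"
      using w_deriv S(2) by (force intro: differentiableI)
    show "\<forall>i. alg S (\<lambda>x. frechet_derivative (\<lambda>x. 1 / (1 - norm x ^ 2)) (at x) (axis i 1))"
    proof
      fix i
      have "alg S (\<lambda>x. (2 * x$i) * (1 / (1 - norm x ^ 2)) * (1 / (1 - norm x ^ 2)))"
        by (intro alg.mul alg.cst alg.crd alg.wgt)
      moreover have "\<forall>x\<in>S. (2 * x$i) * (1 / (1 - norm x ^ 2)) * (1 / (1 - norm x ^ 2))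
         = frechet_derivative (\<lambda>x. 1 / (1 - norm x ^ 2)) (at x) (axis i 1)"
      proof
        fix x assume "x \<in> S"
        then have "norm x < 1" using S(2) by auto
        note e = frechet_derivative_at[OF w_deriv[OF this], symmetric]
        show "(2 * x$i) * (1 / (1 - norm x ^ 2)) * (1 / (1 - norm x ^ 2))
         = frechet_derivative (\<lambda>x. 1 / (1 - norm x ^ 2)) (at x) (axis i 1)"
          by (simp only: e) (simp add: inner_axis power2_eq_square)
      qed
      ultimately show "alg S (\<lambda>x. frechet_derivative (\<lambda>x. 1 / (1 - norm x ^ 2)) (at x) (axis i 1))"
        by (rule alg.ext)
    qed
  qed
next
  case (add f g)
  show ?case
  proof
    show "\<forall>x\<in>S. (\<lambda>x. f x + g x) differentiable at x" using add.IH by auto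
    show "\<forall>i. alg S (\<lambda>x. frechet_derivative (\<lambda>x. f x + g x) (at x) (axis i 1))"
    proof
      fix i
      have "alg S (\<lambda>x. frechet_derivative f (at x) (axis i 1) + frechet_derivative g (at x) (axis i 1))"
        using add.IH by (intro alg.add) auto
      moreover have "\<forall>x\<in>S. frechet_derivative f (at x) (axis i 1) + frechet_derivative g (at x) (axis i 1)
          = frechet_derivative (\<lambda>x. f x + g x) (at x) (axis i 1)"
      proof
        fix x assume x: "x \<in> S"
        have "((\<lambda>x. f x + g x) has_derivative (\<lambda>h. frechet_derivative f (at x) h + frechet_derivative g (at x) h)) (at x)"
          using add.IH x by (intro has_derivative_add) (auto simp: frechet_derivative_works)
        from frechet_derivative_at[OF this] show "frechet_derivative f (at x) (axis i 1) + frechet_derivative g (at x) (axis i 1)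
          = frechet_derivative (\<lambda>x. f x + g x) (at x) (axis i 1)" by metis
      qed
      ultimately show "alg S (\<lambda>x. frechet_derivative (\<lambda>x. f x + g x) (at x) (axis i 1))"
        by (rule alg.ext)
    qed
  qed
next
  case (mul f g)
  show ?case
  proof
    show "\<forall>x\<in>S. (\<lambda>x. f x * g x) differentiable at x" using mul.IH by auto
    show "\<forall>i. alg S (\<lambda>x. frechet_derivative (\<lambda>x. f x * g x) (at x) (axis i 1))"
    proof
      fix i
      have "alg S (\<lambda>x. f x * frechet_derivative g (at x) (axis i 1) + frechet_derivative f (at x) (axis i 1) * g x)"
        using mul by (intro alg.add alg.mul) auto
      moreover have "\<forall>x\<in>S. f x * frechet_derivative g (at x) (axis i 1) + frechet_derivative f (at x) (axis i 1) * g x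
          = frechet_derivative (\<lambda>x. f x * g x) (at x) (axis i 1)"
      proof
        fix x assume x: "x \<in> S"
        have "((\<lambda>x. f x * g x) has_derivative (\<lambda>h. f x * frechet_derivative g (at x) h + frechet_derivative f (at x) h * g x)) (at x)"
          using mul.IH x by (intro has_derivative_mult) (auto simp: frechet_derivative_works)
        from frechet_derivative_at[OF this] show "f x * frechet_derivative g (at x) (axis i 1) + frechet_derivative f (at x) (axis i 1) * g x
          = frechet_derivative (\<lambda>x. f x * g x) (at x) (axis i 1)" by metis
      qed
      ultimately show "alg S (\<lambda>x. frechet_derivative (\<lambda>x. f x * g x) (at x) (axis i 1))"
        by (rule alg.ext)
    qed
  qed
next
  case (ext f g)
  show ?case
  proof
    show "\<forall>x\<in>S. g differentiable at x" using ext fd_cong S(1) by blast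
    show "\<forall>i. alg S (\<lambda>x. frechet_derivative g (at x) (axis i 1))"
    proof
      fix i
      show "alg S (\<lambda>x. frechet_derivative g (at x) (axis i 1))"
      proof (rule alg.ext[of _ "\<lambda>x. frechet_derivative f (at x) (axis i 1)"])
        show "alg S (\<lambda>x. frechet_derivative f (at x) (axis i 1))" using ext.IH by blast
        show "\<forall>x\<in>S. frechet_derivative f (at x) (axis i 1) = frechet_derivative g (at x) (axis i 1)"
          using ext fd_cong S(1) by metis
      qed
    qed
  qed
qed

lemma alg_diff: "alg S f \<Longrightarrow> alg S g \<Longrightarrow> alg S (\<lambda>x. f x - g x)"
proof -
  assume "alg S f" "alg S g"
  then have "alg S (\<lambda>x. f x + (-1) * g x)" by (intro alg.add alg.mul alg.cst)
  then show ?thesis by (rule alg.ext) simp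
qed

lemma alg_sum: "finite A \<Longrightarrow> (\<And>a. a \<in> A \<Longrightarrow> alg S (f a)) \<Longrightarrow> alg S (\<lambda>x. \<Sum>a\<in>A. f a x)"
proof (induction A rule: finite_induct)
  case empty
  then show ?case using alg.cst[of S 0] by simp
next
  case (insert a A)
  then have "alg S (\<lambda>x. f a x + (\<Sum>a\<in>A. f a x))" by (intro alg.add) auto
  then show ?case using insert by simp
qed

lemma alg_christoffel: "alg S (christoffel k i j)"
proof -
  have "alg S (\<lambda>x. (2 * (1 / (1 - norm x ^ 2))) * (x$i * (if j = k then 1 else 0) + x$j * (if i = k then 1 else 0) - x$k * (if i = j then 1 else 0)))"
    by (intro alg.mul alg.add alg_diff alg.cst alg.crd alg.wgt)
  then show ?thesis by (rule alg.ext) (simp add: christoffel_def)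
qed

lemma alg_cov_nabla:
  fixes S :: "(real^'n) set" and u :: "real^'n \<Rightarrow> real"
  assumes S: "open S" "S \<subseteq> ball 0 1" and u: "smooth_on S u"
  shows "alg S (\<lambda>x. cov_nabla j u x I)"
proof (induction j arbitrary: I)
  case 0
  then show ?case using u by (simp add: alg.sm)
next
  case (Suc j)
  show ?case
  proof (cases I)
    case Nil
    then show ?thesis using alg.cst[of S 0] by (simp add: cov_deriv_def)
  next
    case (Cons i1 rest)
    have d: "alg S (\<lambda>x. frechet_derivative (\<lambda>y. cov_nabla j u y rest) (at x) (axis i1 1))"
      using alg_deriv[OF S Suc.IH] by blast
    have "alg S (\<lambda>x. frechet_derivative (\<lambda>y. cov_nabla j u y rest) (at x) (axis i1 1)
         - (\<Sum>l<length rest. \<Sum>\<alpha>\<in>UNIV. christoffel \<alpha> i1 (rest ! l) x * cov_nabla j u x (rest[l := \<alpha>])))"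
      by (intro alg_diff d alg_sum alg.mul alg_christoffel Suc.IH finite_lessThan) simp_all
    then show ?thesis using Cons by (simp add: cov_deriv_def)
  qed
qed

lemma finite_L: "finite {I::'a::finite list. length I = j}"
  using finite_lists_length_eq[of "UNIV::'a set" j] by simp

lemma sum_L_Suc:
  fixes f :: "'a::finite list \<Rightarrow> real"
  shows "(\<Sum>J | length J = Suc j. f J) = (\<Sum>a\<in>UNIV. \<Sum>I | length I = j. f (a # I))"
proof -
  have e: "{J::'a list. length J = Suc j} = (\<lambda>(a, I). a # I) ` (UNIV \<times> {I. length I = j})"
    by (auto simp: image_iff length_Suc_conv)
  have inj: "inj_on (\<lambda>(a, I). a # I) (UNIV \<times> {I::'a list. length I = j})"
    by (auto simp: inj_on_def)
  have "(\<Sum>J | length J = Suc j. f J) = (\<Sum>(a, I)\<in>UNIV \<times> {I. length I = j}. f (a # I))"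
    unfolding e by (subst sum.reindex[OF inj]) (simp add: case_prod_unfold)
  also have "\<dots> = (\<Sum>a\<in>UNIV. \<Sum>I | length I = j. f (a # I))"
    by (subst sum.cartesian_product[symmetric]) simp
  finally show ?thesis .
qed

lemma sum_swap_upd:
  fixes K :: "'a::finite \<Rightarrow> 'a list \<Rightarrow> real"
  assumes l: "l < j"
  shows "(\<Sum>I | length I = j. \<Sum>\<alpha>\<in>UNIV. K (I ! l) (I[l := \<alpha>])) = (\<Sum>J | length J = j. \<Sum>b\<in>UNIV. K b J)"
proof -
  let ?A = "{I::'a list. length I = j} \<times> (UNIV::'a set)"
  let ?h = "\<lambda>(I, \<alpha>). (I[l := \<alpha>], I ! l)"
  have hh: "?h (?h p) = p" if "p \<in> ?A" for p
    using that l by (auto simp: case_prod_unfold)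
  have hA: "?h ` ?A \<subseteq> ?A" by auto
  have bij: "bij_betw ?h ?A ?A"
    by (rule bij_betwI[of _ _ _ ?h]) (use hh in \<open>auto simp: case_prod_unfold\<close>)
  have "(\<Sum>I | length I = j. \<Sum>\<alpha>\<in>UNIV. K (I ! l) (I[l := \<alpha>])) = (\<Sum>p\<in>?A. (\<lambda>(J, b). K b J) (?h p))"
    by (subst sum.cartesian_product) (simp add: case_prod_unfold)
  also have "\<dots> = (\<Sum>p\<in>?A. (\<lambda>(J, b). K b J) p)"
    by (rule sum.reindex_bij_betw[OF bij])
  also have "\<dots> = (\<Sum>J | length J = j. \<Sum>b\<in>UNIV. K b J)"
    by (subst sum.cartesian_product[symmetric]) (simp add: case_prod_unfold)
  finally show ?thesis .
qed

lemma prod_upd_split: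
  fixes \<theta> :: "'a \<Rightarrow> real"
  assumes "l < length I"
  shows "prod_list (map \<theta> I) = \<theta> (I ! l) * prod_list (map \<theta> (take l I @ drop (Suc l) I))"
proof -
  have "I = take l I @ (I ! l) # drop (Suc l) I" using assms by (simp add: id_take_nth_drop)
  then have "prod_list (map \<theta> I) = prod_list (map \<theta> (take l I @ (I ! l) # drop (Suc l) I))" by simp
  also have "\<dots> = \<theta> (I ! l) * prod_list (map \<theta> (take l I @ drop (Suc l) I))" by simp
  finally show ?thesis .
qed

lemma contraction:
  fixes \<theta> :: "real^'n" and p c :: real
  assumes th: "norm \<theta> = 1" and p: "\<bar>p\<bar> < 1" and c: "c = (1 - p^2) / 2"
  shows "(\<Sum>b\<in>UNIV. (\<Sum>a\<in>UNIV. c * christoffel \<alpha> a b (p *\<^sub>R \<theta>) * \<theta>$a) * \<theta>$b) = p * \<theta>$\<alpha>"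
proof -
  have s: "(\<Sum>a\<in>UNIV. \<theta>$a * \<theta>$a) = 1"
    using th by (metis inner_vec_def norm_eq_1 inner_real_def)  
  have n: "norm (p *\<^sub>R \<theta>) ^ 2 = p ^ 2" using th by simp
  have p2: "1 - p^2 \<noteq> 0" using p abs_square_less_1[of p] by linarith
  have cg: "c * christoffel \<alpha> a b (p *\<^sub>R \<theta>) = p * (\<theta>$a * (if b = \<alpha> then 1 else 0) + \<theta>$b * (if a = \<alpha> then 1 else 0) - \<theta>$\<alpha> * (if a = b then 1 else 0))" for a b
    unfolding christoffel_def n c using p2 by (simp add: field_simps)
  have inner: "(\<Sum>a\<in>UNIV. c * christoffel \<alpha> a b (p *\<^sub>R \<theta>) * \<theta>$a) = (if b = \<alpha> then p else 0)" for b
  proof -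
    have "(\<Sum>a\<in>UNIV. c * christoffel \<alpha> a b (p *\<^sub>R \<theta>) * \<theta>$a)
       = (\<Sum>a\<in>UNIV. (if b = \<alpha> then p else 0) * (\<theta>$a * \<theta>$a) + (if a = \<alpha> then p * \<theta>$b * \<theta>$a else 0) - (if a = b then p * \<theta>$\<alpha> * \<theta>$a else 0))"
      unfolding cg by (rule sum.cong) (auto simp: algebra_simps)
    also have "\<dots> = (if b = \<alpha> then p else 0) * (\<Sum>a\<in>UNIV. \<theta>$a * \<theta>$a) + p * \<theta>$b * \<theta>$\<alpha> - p * \<theta>$\<alpha> * \<theta>$b"
      by (simp add: sum.distrib sum_subtractf sum_distrib_left)
    also have "\<dots> = (if b = \<alpha> then p else 0)" using s by simp
    finally show ?thesis .
  qed
  have "(\<Sum>b\<in>UNIV. (if b = \<alpha> then p else 0) * \<theta>$b) = (\<Sum>b\<in>UNIV. if b = \<alpha> then p * \<theta>$b else 0)" by (rule sum.cong) auto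
  then show ?thesis unfolding inner by simp
qed

lemma inner_l:
  fixes \<theta> :: "real^'n" and p c :: real and T :: "'n list \<Rightarrow> real"
  assumes th: "norm \<theta> = 1" and p: "\<bar>p\<bar> < 1" and c: "c = (1 - p^2) / 2" and l: "l < j"
  shows "(\<Sum>I | length I = j. \<Sum>a\<in>UNIV. \<Sum>\<alpha>\<in>UNIV. c * christoffel \<alpha> a (I ! l) (p *\<^sub>R \<theta>) * T (I[l := \<alpha>]) * \<theta>$a * prod_list (map (\<lambda>i. \<theta>$i) I))
    = p * (\<Sum>I | length I = j. T I * prod_list (map (\<lambda>i. \<theta>$i) I))"
proof -
  define Q where "Q J = prod_list (map (\<lambda>i. \<theta>$i) (take l J @ drop (Suc l) J))" for J :: "'n list"
  define K where "K b J = (\<Sum>a\<in>UNIV. c * christoffel (J ! l) a b (p *\<^sub>R \<theta>) * \<theta>$a) * \<theta>$b * T J * Q J" for b J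
  have step: "(\<Sum>a\<in>UNIV. \<Sum>\<alpha>\<in>UNIV. c * christoffel \<alpha> a (I ! l) (p *\<^sub>R \<theta>) * T (I[l := \<alpha>]) * \<theta>$a * prod_list (map (\<lambda>i. \<theta>$i) I))
     = (\<Sum>\<alpha>\<in>UNIV. K (I ! l) (I[l := \<alpha>]))" if I: "length I = j" for I
  proof -
    have P: "prod_list (map (\<lambda>i. \<theta>$i) I) = \<theta>$(I ! l) * Q I"
      unfolding Q_def using prod_upd_split[of l I "\<lambda>i. \<theta>$i"] I l by simp
    have Qu: "Q (I[l := \<alpha>]) = Q I" for \<alpha>
      unfolding Q_def by (simp add: take_update_cancel drop_update_cancel)
    have nth: "I[l := \<alpha>] ! l = \<alpha>" for \<alpha> using I l by simp
    have "(\<Sum>a\<in>UNIV. \<Sum>\<alpha>\<in>UNIV. c * christoffel \<alpha> a (I ! l) (p *\<^sub>R \<theta>) * T (I[l := \<alpha>]) * \<theta>$a * prod_list (map (\<lambda>i. \<theta>$i) I))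
       = (\<Sum>\<alpha>\<in>UNIV. \<Sum>a\<in>UNIV. c * christoffel \<alpha> a (I ! l) (p *\<^sub>R \<theta>) * T (I[l := \<alpha>]) * \<theta>$a * prod_list (map (\<lambda>i. \<theta>$i) I))"
      by (rule sum.swap)
    also have "\<dots> = (\<Sum>\<alpha>\<in>UNIV. K (I ! l) (I[l := \<alpha>]))"
      unfolding K_def nth Qu P by (simp add: sum_distrib_left sum_distrib_right mult_ac)
    finally show ?thesis .
  qed
  have "(\<Sum>I | length I = j. \<Sum>a\<in>UNIV. \<Sum>\<alpha>\<in>UNIV. c * christoffel \<alpha> a (I ! l) (p *\<^sub>R \<theta>) * T (I[l := \<alpha>]) * \<theta>$a * prod_list (map (\<lambda>i. \<theta>$i) I))
      = (\<Sum>I | length I = j. \<Sum>\<alpha>\<in>UNIV. K (I ! l) (I[l := \<alpha>]))"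
    by (rule sum.cong) (auto simp: step)
  also have "\<dots> = (\<Sum>J | length J = j. \<Sum>b\<in>UNIV. K b J)"
    by (rule sum_swap_upd[OF l])
  also have "\<dots> = (\<Sum>J | length J = j. p * (T J * prod_list (map (\<lambda>i. \<theta>$i) J)))"
  proof (rule sum.cong[OF refl])
    fix J :: "'n list" assume "J \<in> {J. length J = j}"
    then have J: "length J = j" by simp
    have P: "prod_list (map (\<lambda>i. \<theta>$i) J) = \<theta>$(J ! l) * Q J"
      unfolding Q_def using prod_upd_split[of l J "\<lambda>i. \<theta>$i"] J l by simp
    have "(\<Sum>b\<in>UNIV. K b J) = (\<Sum>b\<in>UNIV. (\<Sum>a\<in>UNIV. c * christoffel (J ! l) a b (p *\<^sub>R \<theta>) * \<theta>$a) * \<theta>$b) * (T J * Q J)"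
      unfolding K_def by (simp add: sum_distrib_left sum_distrib_right mult_ac)
    also have "\<dots> = p * \<theta>$(J ! l) * (T J * Q J)"
      using contraction[OF th p c] by simp
    finally show "(\<Sum>b\<in>UNIV. K b J) = p * (T J * prod_list (map (\<lambda>i. \<theta>$i) J))"
      unfolding P by (simp add: mult_ac)
  qed
  also have "\<dots> = p * (\<Sum>I | length I = j. T I * prod_list (map (\<lambda>i. \<theta>$i) I))"
    by (simp add: sum_distrib_left)
  finally show ?thesis .
qed

lemma alg_step:
  fixes Tf :: "real^'n \<Rightarrow> 'n list \<Rightarrow> real" and \<theta> :: "real^'n" and p c :: real
  assumes th: "norm \<theta> = 1" and p: "\<bar>p\<bar> < 1" and c: "c = (1 - p^2) / 2"
  shows "(\<Sum>J | length J = Suc j. cov_deriv Tf (p *\<^sub>R \<theta>) J * c ^ Suc j * prod_list (map (\<lambda>i. \<theta>$i) J))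
   = (\<Sum>I | length I = j. (\<Sum>a\<in>UNIV. c * \<theta>$a * frechet_derivative (\<lambda>y. Tf y I) (at (p *\<^sub>R \<theta>)) (axis a 1)) * c ^ j * prod_list (map (\<lambda>i. \<theta>$i) I)
        - Tf (p *\<^sub>R \<theta>) I * (real j * p * c ^ j) * prod_list (map (\<lambda>i. \<theta>$i) I))"
proof -
  define x where "x = p *\<^sub>R \<theta>"
  define P where "P I = prod_list (map (\<lambda>i. \<theta>$i) I)" for I :: "'n list"
  define Tp where "Tp a I = frechet_derivative (\<lambda>y. Tf y I) (at x) (axis a 1)" for a I
  define G where "G a I = (\<Sum>l<j. \<Sum>\<alpha>\<in>UNIV. christoffel \<alpha> a (I ! l) x * Tf x (I[l := \<alpha>]))" for a I
  have "(\<Sum>J | length J = Suc j. cov_deriv Tf x J * c ^ Suc j * P J)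
     = (\<Sum>a\<in>UNIV. \<Sum>I | length I = j. cov_deriv Tf x (a # I) * c ^ Suc j * P (a # I))"
    by (rule sum_L_Suc)
  also have "\<dots> = (\<Sum>a\<in>UNIV. \<Sum>I | length I = j. Tp a I * c ^ Suc j * (\<theta>$a * P I) - G a I * c ^ Suc j * (\<theta>$a * P I))"
    by (intro sum.cong refl) (simp add: cov_deriv_def Tp_def G_def P_def algebra_simps)
  also have "\<dots> = (\<Sum>a\<in>UNIV. \<Sum>I | length I = j. Tp a I * c ^ Suc j * (\<theta>$a * P I)) - (\<Sum>a\<in>UNIV. \<Sum>I | length I = j. G a I * c ^ Suc j * (\<theta>$a * P I))"
    by (simp add: sum_subtractf)
  also have "(\<Sum>a\<in>UNIV. \<Sum>I | length I = j. Tp a I * c ^ Suc j * (\<theta>$a * P I))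
      = (\<Sum>I | length I = j. (\<Sum>a\<in>UNIV. c * \<theta>$a * Tp a I) * c ^ j * P I)"
    by (subst sum.swap) (simp add: sum_distrib_left sum_distrib_right mult_ac)
  also have "(\<Sum>a\<in>UNIV. \<Sum>I | length I = j. G a I * c ^ Suc j * (\<theta>$a * P I))
      = c ^ j * (\<Sum>l<j. \<Sum>I | length I = j. \<Sum>a\<in>UNIV. \<Sum>\<alpha>\<in>UNIV. c * christoffel \<alpha> a (I ! l) x * Tf x (I[l := \<alpha>]) * \<theta>$a * P I)"
  proof -
    have "(\<Sum>a\<in>UNIV. \<Sum>I | length I = j. G a I * c ^ Suc j * (\<theta>$a * P I))
      = (\<Sum>a\<in>UNIV. \<Sum>I | length I = j. \<Sum>l<j. \<Sum>\<alpha>\<in>UNIV. c ^ j * (c * christoffel \<alpha> a (I ! l) x * Tf x (I[l := \<alpha>]) * \<theta>$a * P I))"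
      unfolding G_def by (simp add: sum_distrib_left sum_distrib_right mult_ac)
    also have "\<dots> = (\<Sum>I | length I = j. \<Sum>a\<in>UNIV. \<Sum>l<j. \<Sum>\<alpha>\<in>UNIV. c ^ j * (c * christoffel \<alpha> a (I ! l) x * Tf x (I[l := \<alpha>]) * \<theta>$a * P I))"
      by (rule sum.swap)
    also have "\<dots> = (\<Sum>I | length I = j. \<Sum>l<j. \<Sum>a\<in>UNIV. \<Sum>\<alpha>\<in>UNIV. c ^ j * (c * christoffel \<alpha> a (I ! l) x * Tf x (I[l := \<alpha>]) * \<theta>$a * P I))"
      by (intro sum.cong refl sum.swap)
    also have "\<dots> = (\<Sum>l<j. \<Sum>I | length I = j. \<Sum>a\<in>UNIV. \<Sum>\<alpha>\<in>UNIV. c ^ j * (c * christoffel \<alpha> a (I ! l) x * Tf x (I[l := \<alpha>]) * \<theta>$a * P I))"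
      by (rule sum.swap)
    also have "\<dots> = c ^ j * (\<Sum>l<j. \<Sum>I | length I = j. \<Sum>a\<in>UNIV. \<Sum>\<alpha>\<in>UNIV. c * christoffel \<alpha> a (I ! l) x * Tf x (I[l := \<alpha>]) * \<theta>$a * P I)"
      by (simp add: sum_distrib_left)
    finally show ?thesis .
  qed
  also have "(\<Sum>l<j. \<Sum>I | length I = j. \<Sum>a\<in>UNIV. \<Sum>\<alpha>\<in>UNIV. c * christoffel \<alpha> a (I ! l) x * Tf x (I[l := \<alpha>]) * \<theta>$a * P I)
      = (\<Sum>l<j. p * (\<Sum>I | length I = j. Tf x I * P I))"
    unfolding x_def P_def by (intro sum.cong refl inner_l[OF th p c]) simp
  also have "c ^ j * (\<Sum>l<j. p * (\<Sum>I | length I = j. Tf x I * P I)) = (\<Sum>I | length I = j. Tf x I * (real j * p * c ^ j) * P I)"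
    by (simp add: sum_distrib_left mult_ac)
  finally have "(\<Sum>J | length J = Suc j. cov_deriv Tf x J * c ^ Suc j * P J)
     = (\<Sum>I | length I = j. (\<Sum>a\<in>UNIV. c * \<theta>$a * Tp a I) * c ^ j * P I) - (\<Sum>I | length I = j. Tf x I * (real j * p * c ^ j) * P I)" .
  then show ?thesis unfolding x_def P_def Tp_def by (simp add: sum_subtractf)
qed

definition rho :: "real \<Rightarrow> real" where "rho t = (exp t - 1) / (exp t + 1)"
definition cc :: "real \<Rightarrow> real" where "cc t = (1 - rho t ^ 2) / 2"

lemma rho_alg: "(e::real) > 0 \<Longrightarrow> (e * (e + 1) - (e - 1) * e) / ((e + 1) * (e + 1)) = (1 - ((e - 1) / (e + 1)) ^ 2) / 2"
proof -
  assume e: "e > 0"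
  then have h: "e + 1 \<noteq> 0" by simp
  have 1: "(1 - ((e - 1) / (e + 1)) ^ 2) / 2 = (((e + 1)^2 - (e - 1)^2) / (e + 1)^2) / 2"
    using h by (simp only: power_divide) (simp add: diff_divide_distrib)
  have 2: "(e + 1)^2 - (e - 1)^2 = 4 * e" by (simp add: power2_eq_square algebra_simps)
  have 3: "e * (e + 1) - (e - 1) * e = 2 * e" by (simp add: algebra_simps)
  show ?thesis unfolding 1 2 3 by (simp add: power2_eq_square)
qed

lemma rho_deriv: "(rho has_real_derivative cc t) (at t)"
proof -
  have e: "exp t + 1 \<noteq> 0" by (smt (verit) exp_gt_zero)
  have d: "(rho has_real_derivative ((exp t * (exp t + 1) - (exp t - 1) * exp t) / ((exp t + 1) * (exp t + 1)))) (at t)"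
  proof -
    have "((\<lambda>x. (exp x - 1) / (exp x + 1)) has_real_derivative ((exp t - 0) * (exp t + 1) - (exp t - 1) * (exp t + 0)) / ((exp t + 1) * (exp t + 1))) (at t)"
      by (rule DERIV_divide[OF DERIV_diff[OF DERIV_exp DERIV_const] DERIV_add[OF DERIV_exp DERIV_const] e])
    then show ?thesis unfolding rho_def[abs_def] by simp
  qed
  have eq: "(exp t * (exp t + 1) - (exp t - 1) * exp t) / ((exp t + 1) * (exp t + 1)) = cc t"
    unfolding cc_def rho_def by (rule rho_alg) simp
  show ?thesis using d unfolding eq .
qed

lemma rho_abs_aux: "(e::real) > 0 \<Longrightarrow> \<bar>(e - 1) / (e + 1)\<bar> < 1"
  by (simp add: abs_less_iff field_simps)

lemma rho_abs: "\<bar>rho t\<bar> < 1"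
  unfolding rho_def by (rule rho_abs_aux) (rule exp_gt_zero)

lemma rho_pos_aux: "(e::real) > 1 \<Longrightarrow> (e - 1) / (e + 1) > 0"
  by (simp add: field_simps)

lemma rho_pos: "t > 0 \<Longrightarrow> rho t > 0"
  unfolding rho_def by (rule rho_pos_aux) simp

lemma cc_deriv: "(cc has_real_derivative (- rho t * cc t)) (at t)"
proof -
  have "((\<lambda>s. (1 - rho s ^ 2) / 2) has_real_derivative ((0 - of_nat 2 * (cc t * rho t ^ (2 - Suc 0))) / 2)) (at t)"
    by (intro DERIV_cdivide DERIV_diff DERIV_const DERIV_power rho_deriv)
  moreover have "(0 - of_nat 2 * (cc t * rho t ^ (2 - Suc 0))) / 2 = - rho t * cc t" by simp
  ultimately show ?thesis unfolding cc_def[abs_def] by (simp only:)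
qed

lemma hd_rho:
  fixes \<theta> :: "real^'n"
  assumes "norm \<theta> = 1" "t > 0"
  shows "hd (rho t *\<^sub>R \<theta>) = t"
proof -
  have n: "norm (rho t *\<^sub>R \<theta>) = rho t" using assms rho_pos[of t] by simp
  have "(1 + (e - 1) / (e + 1)) / (1 - (e - 1) / (e + 1)) = e" if "e > 0" for e :: real
    using that by (simp add: field_simps)
  then have "(1 + rho t) / (1 - rho t) = exp t"
    unfolding rho_def by simp
  then show ?thesis unfolding hd_def n by simp
qed


lemma comp_deriv:
  fixes Tf :: "real^'n \<Rightarrow> 'n list \<Rightarrow> real" and \<theta> :: "real^'n"
  assumes dif: "(\<lambda>y. Tf y I) differentiable at (rho t *\<^sub>R \<theta>)"
  shows "((\<lambda>s. Tf (rho s *\<^sub>R \<theta>) I) has_real_derivative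
     (\<Sum>a\<in>UNIV. cc t * \<theta>$a * frechet_derivative (\<lambda>y. Tf y I) (at (rho t *\<^sub>R \<theta>)) (axis a 1))) (at t)"
proof -
  define f' where "f' = frechet_derivative (\<lambda>y. Tf y I) (at (rho t *\<^sub>R \<theta>))"
  have r: "(rho has_derivative (*) (cc t)) (at t)" using rho_deriv has_field_derivative_def by blast
  have g: "((\<lambda>s. rho s *\<^sub>R \<theta>) has_derivative (\<lambda>h. (cc t * h) *\<^sub>R \<theta>)) (at t)"
    using bounded_linear.has_derivative[OF bounded_linear_scaleR_left[of \<theta>] r] by simp
  have f: "((\<lambda>y. Tf y I) has_derivative f') (at (rho t *\<^sub>R \<theta>))"
    unfolding f'_def using dif frechet_derivative_works by blast
  have c: "((\<lambda>s. Tf (rho s *\<^sub>R \<theta>) I) has_derivative (\<lambda>h. f' ((cc t * h) *\<^sub>R \<theta>))) (at t)"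
    using has_derivative_compose[OF g f] by simp
  have lin: "linear f'" using f has_derivative_linear by blast
  have th: "f' \<theta> = (\<Sum>a\<in>UNIV. \<theta>$a * f' (axis a 1))"
  proof -
    have "f' \<theta> = f' (\<Sum>a\<in>UNIV. \<theta>$a *\<^sub>R axis a 1)"
      using basis_expansion[of \<theta>] by (simp add: scalar_mult_eq_scaleR)
    also have "\<dots> = (\<Sum>a\<in>UNIV. \<theta>$a * f' (axis a 1))"
      using lin by (simp add: linear_sum linear_cmul)
    finally show ?thesis .
  qed
  have "(\<lambda>h. f' ((cc t * h) *\<^sub>R \<theta>)) = (*) (\<Sum>a\<in>UNIV. cc t * \<theta>$a * f' (axis a 1))"
  proof
    fix h
    have "f' ((cc t * h) *\<^sub>R \<theta>) = (cc t * h) * f' \<theta>" using linear_cmul[OF lin, of "cc t * h" \<theta>] by simp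
    also have "\<dots> = (\<Sum>a\<in>UNIV. cc t * \<theta>$a * f' (axis a 1)) * h"
      unfolding th by (simp add: sum_distrib_left sum_distrib_right mult_ac)
    finally show "f' ((cc t * h) *\<^sub>R \<theta>) = (\<Sum>a\<in>UNIV. cc t * \<theta>$a * f' (axis a 1)) * h" .
  qed
  with c show ?thesis unfolding has_field_derivative_def f'_def by simp
qed


lemma pow_aux: "real j * (- p * c * c ^ (j - Suc 0)) = - (real j * p * c ^ j)"
  by (cases j) (simp_all add: mult_ac)

lemma FF_deriv:
  fixes Tf :: "real^'n \<Rightarrow> 'n list \<Rightarrow> real" and \<theta> :: "real^'n"
  assumes th: "norm \<theta> = 1" and dif: "\<And>I. (\<lambda>y. Tf y I) differentiable at (rho t *\<^sub>R \<theta>)"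
  shows "((\<lambda>s. \<Sum>I | length I = j. Tf (rho s *\<^sub>R \<theta>) I * cc s ^ j * prod_list (map (\<lambda>i. \<theta>$i) I)) has_real_derivative
     (\<Sum>J | length J = Suc j. cov_deriv Tf (rho t *\<^sub>R \<theta>) J * cc t ^ Suc j * prod_list (map (\<lambda>i. \<theta>$i) J))) (at t)"
proof -
  define D where "D I = (\<Sum>a\<in>UNIV. cc t * \<theta>$a * frechet_derivative (\<lambda>y. Tf y I) (at (rho t *\<^sub>R \<theta>)) (axis a 1))" for I
  have each: "((\<lambda>s. Tf (rho s *\<^sub>R \<theta>) I * cc s ^ j * prod_list (map (\<lambda>i. \<theta>$i) I)) has_real_derivative
      (D I * cc t ^ j * prod_list (map (\<lambda>i. \<theta>$i) I) - Tf (rho t *\<^sub>R \<theta>) I * (real j * rho t * cc t ^ j) * prod_list (map (\<lambda>i. \<theta>$i) I))) (at t)" for I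
  proof -
    show ?thesis
      apply (rule DERIV_cong[OF DERIV_mult[OF DERIV_mult[OF comp_deriv[OF dif] DERIV_power[OF cc_deriv]] DERIV_const]])
      using pow_aux[of j "rho t" "cc t"] unfolding D_def by (simp add: algebra_simps) metis
  qed
  have "((\<lambda>s. \<Sum>I | length I = j. Tf (rho s *\<^sub>R \<theta>) I * cc s ^ j * prod_list (map (\<lambda>i. \<theta>$i) I)) has_real_derivative
     (\<Sum>I | length I = j. D I * cc t ^ j * prod_list (map (\<lambda>i. \<theta>$i) I) - Tf (rho t *\<^sub>R \<theta>) I * (real j * rho t * cc t ^ j) * prod_list (map (\<lambda>i. \<theta>$i) I))) (at t)"
    by (rule DERIV_sum) (rule each)
  moreover have "(\<Sum>J | length J = Suc j. cov_deriv Tf (rho t *\<^sub>R \<theta>) J * cc t ^ Suc j * prod_list (map (\<lambda>i. \<theta>$i) J))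
     = (\<Sum>I | length I = j. D I * cc t ^ j * prod_list (map (\<lambda>i. \<theta>$i) I) - Tf (rho t *\<^sub>R \<theta>) I * (real j * rho t * cc t ^ j) * prod_list (map (\<lambda>i. \<theta>$i) I))"
    unfolding D_def by (rule alg_step[OF th rho_abs cc_def])
  ultimately show ?thesis by simp
qed

lemma prod_div: "prod_list (map (\<lambda>i. (x::real^'n)$i / r) I) = prod_list (map (\<lambda>i. x$i) I) / r ^ length I"
  by (induction I) auto

lemma rho_inv: assumes "0 \<le> r" "r < (1::real)"
  shows "(((1 + r) / (1 - r)) - 1) / (((1 + r) / (1 - r)) + 1) = r"
  using assms by (simp add: field_simps)

theorem lemma3p1:
  fixes R :: ereal and u :: "real^'n \<Rightarrow> real" and v :: "real \<Rightarrow> real"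
  assumes "R > 0"
    and "smooth_on (hball R) u"
    and "\<forall>x\<in>hball R. u x = v (hd x)"
  shows "smooth_on {t. 0 < t \<and> ereal t < R} v \<and>
    (\<forall>j::nat. \<forall>x\<in>hball R - {0}.
       (deriv ^^ j) v (hd x) =
         ((1 - norm x ^ 2) / 2) ^ j *
         (\<Sum>is | length is = j. cov_nabla j u x is * prod_list (map (\<lambda>i. x$i) is) / norm x ^ j))"
proof -
  define S where "S = (hball R :: (real^'n) set)"
  define U where "U = {t. 0 < t \<and> ereal t < R}"
  have Ssub: "S \<subseteq> ball 0 1" unfolding S_def hball_def by auto
  have hdc: "continuous_on (ball (0::real^'n) 1) hd"
  proof -
    have "continuous_on (ball (0::real^'n) 1) (\<lambda>x. ln ((1 + norm x) / (1 - norm x)))"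
      by (intro continuous_intros) (auto simp: field_simps, smt (verit) norm_ge_zero)
    then show ?thesis unfolding hd_def[abs_def] .
  qed
  have Sopen: "open S"
  proof (cases R)
    case (real r)
    have "S = ball 0 1 \<inter> hd -` {..<r}" unfolding S_def hball_def real by auto
    moreover have "open (hd -` {..<r} \<inter> ball (0::real^'n) 1)"
      using continuous_on_open_vimage[OF open_ball, THEN iffD1, OF hdc, rule_format, OF open_lessThan] by simp
    ultimately show ?thesis by (simp add: Int_commute)
  next
    case PInf
    have "S = ball 0 1" unfolding S_def hball_def PInf by auto
    then show ?thesis by simp
  next
    case MInf
    then show ?thesis using assms(1) by simp
  qed
  have Uopen: "open U"
  proof (cases R)
    case (real r)
    have "U = {0<..} \<inter> {..<r}" unfolding U_def real by auto
    then show ?thesis by (simp add: open_Int)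
  next
    case PInf
    have "U = {0<..}" unfolding U_def PInf by auto
    then show ?thesis by simp
  next
    case MInf
    then show ?thesis using assms(1) by simp
  qed
  have gamS: "rho t *\<^sub>R \<theta> \<in> S" if th: "norm \<theta> = 1" and t: "t \<in> U" for \<theta> :: "real^'n" and t
  proof -
    have "norm (rho t *\<^sub>R \<theta>) < 1" using th rho_abs[of t] by simp
    moreover have "hd (rho t *\<^sub>R \<theta>) = t" using hd_rho[OF th] t unfolding U_def by simp
    ultimately show ?thesis using t unfolding S_def hball_def U_def by simp
  qed
  have dif: "(\<lambda>y. cov_nabla j u y I) differentiable at y" if "y \<in> S" for j I y
    using alg_deriv[OF Sopen Ssub alg_cov_nabla[OF Sopen Ssub assms(2)[folded S_def]]] that by blast
  define FF where "FF \<theta> j t = (\<Sum>I | length I = j. cov_nabla j u (rho t *\<^sub>R \<theta>) I * cc t ^ j * prod_list (map (\<lambda>i. \<theta>$i) I))"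
    for \<theta> :: "real^'n" and j t
  have Fder: "(FF \<theta> j has_real_derivative FF \<theta> (Suc j) t) (at t)" if th: "norm \<theta> = 1" and t: "t \<in> U" for \<theta> j t
  proof -
    have d: "\<And>I. (\<lambda>y. cov_nabla j u y I) differentiable at (rho t *\<^sub>R \<theta>)" using dif gamS[OF th t] by blast
    show ?thesis unfolding FF_def[abs_def] using FF_deriv[OF th d, where j=j] by simp
  qed
  have F0: "FF \<theta> 0 t = v t" if th: "norm \<theta> = 1" and t: "t \<in> U" for \<theta> t
  proof -
    have "{I::'n list. length I = 0} = {[]}" by auto
    then have "FF \<theta> 0 t = u (rho t *\<^sub>R \<theta>)" unfolding FF_def by simp
    also have "\<dots> = v (hd (rho t *\<^sub>R \<theta>))" using assms(3) gamS[OF th t] unfolding S_def by blast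
    also have "\<dots> = v t" using hd_rho[OF th] t unfolding U_def by simp
    finally show ?thesis .
  qed
  have derivs: "\<forall>t\<in>U. (deriv ^^ j) v t = FF \<theta> j t" if th: "norm \<theta> = 1" for \<theta> j
  proof (induction j)
    case 0
    then show ?case using F0[OF th] by simp
  next
    case (Suc j)
    show ?case
    proof
      fix t assume t: "t \<in> U"
      have "((deriv ^^ j) v has_real_derivative FF \<theta> (Suc j) t) (at t)"
        by (rule has_field_derivative_transform_within_open[OF Fder[OF th t] Uopen t]) (use Suc in auto)
      then show "(deriv ^^ Suc j) v t = FF \<theta> (Suc j) t" by (simp add: DERIV_imp_deriv)
    qed
  qed
  obtain i0 :: 'n where True by blast
  define e where "e = (axis i0 1 :: real^'n)"
  have ne: "norm e = 1" unfolding e_def by simp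
  have smooth: "smooth_on U v"
  proof (rule smooth_on.coinduct[where X = "\<lambda>f. \<exists>j. \<forall>t\<in>U. f t = FF e j t"])
    show "\<exists>j. \<forall>t\<in>U. v t = FF e j t" using F0[OF ne] by (metis funpow_0)
  next
    fix f assume "\<exists>j. \<forall>t\<in>U. f t = FF e j t"
    then obtain j where j: "\<forall>t\<in>U. f t = FF e j t" by blast
    have fd: "(f has_real_derivative FF e (Suc j) t) (at t)" if t: "t \<in> U" for t
      by (rule has_field_derivative_transform_within_open[OF Fder[OF ne t] Uopen t]) (use j in auto)
    have "f differentiable_on U"
      using fd Uopen by (auto simp: differentiable_on_eq_differentiable_at real_differentiable_def)
    moreover have "\<forall>t\<in>U. frechet_derivative f (at t) 1 = FF e (Suc j) t"
    proof
      fix t assume t: "t \<in> U"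
      have "(f has_derivative (*) (FF e (Suc j) t)) (at t)" using fd[OF t] has_field_derivative_def by blast
      from frechet_derivative_at[OF this] show "frechet_derivative f (at t) 1 = FF e (Suc j) t" by (metis mult_1_right)
    qed
    ultimately show "\<exists>g. f = g \<and> g differentiable_on U \<and>
         (\<forall>b\<in>Basis. (\<exists>j. \<forall>t\<in>U. frechet_derivative g (at t) b = FF e j t) \<or> smooth_on U (\<lambda>x. frechet_derivative g (at x) b))"
      by (auto simp: Basis_real_def)
  qed
  have formula: "(deriv ^^ j) v (hd x) = ((1 - norm x ^ 2) / 2) ^ j *
         (\<Sum>is | length is = j. cov_nabla j u x is * prod_list (map (\<lambda>i. x$i) is) / norm x ^ j)"
    if x: "x \<in> hball R - {0}" for j x
  proof -
    define r where "r = norm x"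
    have r0: "r > 0" "r < 1" using x unfolding r_def hball_def by auto
    define \<theta> where "\<theta> = (1 / r) *\<^sub>R x"
    have th: "norm \<theta> = 1" unfolding \<theta>_def r_def using r0 r_def by simp
    define t where "t = hd x"
    have "(1 + r) / (1 - r) > 0" using r0 by (simp add: field_simps)
    then have et: "exp t = (1 + r) / (1 - r)" unfolding t_def hd_def r_def by simp
    have rt: "rho t = r" unfolding rho_def et by (rule rho_inv) (use r0 in auto)
    have t0: "t > 0"
    proof -
      have "(1 + r) / (1 - r) > 1" using r0 by (simp add: field_simps)
      then show ?thesis unfolding t_def hd_def r_def by simp
    qed
    have tU: "t \<in> U" unfolding U_def using t0 x unfolding t_def hball_def by auto
    have gx: "rho t *\<^sub>R \<theta> = x" unfolding rt \<theta>_def using r0 by simp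
    have ct: "cc t = (1 - norm x ^ 2) / 2" unfolding cc_def rt r_def ..
    have "(deriv ^^ j) v (hd x) = FF \<theta> j t" using derivs[OF th] tU unfolding t_def by blast
    also have "\<dots> = (\<Sum>I | length I = j. cov_nabla j u x I * ((1 - norm x ^ 2) / 2) ^ j * (prod_list (map (\<lambda>i. x$i) I) / norm x ^ j))"
      unfolding FF_def gx ct
    proof (rule sum.cong[OF refl])
      fix I :: "'n list" assume "I \<in> {I. length I = j}"
      then have lI: "length I = j" by simp
      have "(\<lambda>i. \<theta>$i) = (\<lambda>i. x$i / r)" unfolding \<theta>_def by (auto simp: divide_inverse mult.commute)
      then have "prod_list (map (\<lambda>i. \<theta>$i) I) = prod_list (map (\<lambda>i. x$i) I) / norm x ^ j"
        using prod_div[of x r I] lI r_def by simp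
      then show "cov_nabla j u x I * ((1 - norm x ^ 2) / 2) ^ j * prod_list (map (\<lambda>i. \<theta>$i) I)
         = cov_nabla j u x I * ((1 - norm x ^ 2) / 2) ^ j * (prod_list (map (\<lambda>i. x$i) I) / norm x ^ j)"
        by (simp only:)
    qed
    also have "\<dots> = ((1 - norm x ^ 2) / 2) ^ j *
         (\<Sum>is | length is = j. cov_nabla j u x is * prod_list (map (\<lambda>i. x$i) is) / norm x ^ j)"
      by (simp add: sum_distrib_left mult_ac)
    finally show ?thesis .
  qed
  show ?thesis using smooth formula unfolding U_def by blast
qed

end
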